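(* Let $\nu\in\mathbb{C}$ and $a,b,x>0$. Then $$J_{\nu}(ax)J_{\nu}(bx)=\left(\frac{abx}{2\sqrt{a^2+b^2}}\right)^{\nu}\sum_{r=0}^{\infty}\frac{1}{r!\,\Gamma(\nu+r+1)}\left(\frac{abx}{2\sqrt{a^2+b^2}}\right)^{2r}J_{\nu+2r}\!\left(x\sqrt{a^2+b^2}\right).$$
   Context: $J_\nu$ is the Bessel function of the first kind of order $\nu$; $1/\Gamma$ is understood as the entire reciprocal Gamma function. *)

theory Defs
  imports "HOL-Analysis.Analysis"
begin

text \<open>Bessel function of the first kind of (complex) order nu, via its power series,
  using the principal branch of the power and the entire reciprocal Gamma function rGamma.\<close>
definition besselJ :: "complex \<Rightarrow> complex \<Rightarrow> complex" where
  "besselJ \<nu> z = (\<Sum>k. ((-1) ^ k * rGamma (\<nu> + of_nat k + 1) / of_nat (fact k))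
                       * (z / 2) powr \<nu> * (z / 2) ^ (2 * k))"

end

theory Submission
  imports Defs
begin


lemma poch_shift:
  "pochhammer ((z::complex) + 1) (Suc n) = pochhammer z (Suc n) + of_nat (Suc n) * pochhammer (z + 1) n"
proof -
  have a: "pochhammer (z+1) (Suc n) = pochhammer (z+1) n * (z + 1 + of_nat n)" by (rule pochhammer_Suc)
  have b: "pochhammer z (Suc n) = z * pochhammer (z+1) n" by (rule pochhammer_rec)
  show ?thesis unfolding a b by (simp add: algebra_simps)
qed

lemma poch_vandermonde:
  "pochhammer ((y::complex) + of_nat k) l =
     (\<Sum>r\<le>l. of_nat ((k choose r) * (l choose r) * fact r) * pochhammer (y + of_nat r) (l - r))"
proof (induction k arbitrary: y l)
  case 0
  have "(\<Sum>r\<le>l. of_nat ((0 choose r) * (l choose r) * fact r) * pochhammer (y + of_nat r) (l - r))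
        = (\<Sum>r\<in>{0}. of_nat ((0 choose r) * (l choose r) * fact r) * pochhammer (y + of_nat r) (l - r))"
    by (intro sum.mono_neutral_right) auto
  then show ?case by simp
next
  case (Suc k)
  show ?case
  proof (cases l)
    case 0
    then show ?thesis by simp
  next
    case (Suc n)
    define g where "g r = pochhammer (y + of_nat r) (Suc n - r)" for r
    have e: "pochhammer (y + of_nat (Suc k)) (Suc n) =
        pochhammer (y + of_nat k) (Suc n) + of_nat (Suc n) * pochhammer ((y + 1) + of_nat k) n"
      using poch_shift[of "y + of_nat k" n] by (simp add: algebra_simps)
    have h1: "pochhammer (y + of_nat k) (Suc n) = g 0 +
        (\<Sum>r\<le>n. of_nat ((k choose Suc r) * (Suc n choose Suc r) * fact (Suc r)) * g (Suc r))"
      unfolding Suc.IH[of y "Suc n"] g_def by (subst sum.atMost_Suc_shift) simp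
    have h2: "pochhammer ((y + 1) + of_nat k) n =
        (\<Sum>r\<le>n. of_nat ((k choose r) * (n choose r) * fact r) * g (Suc r))"
      unfolding Suc.IH[of "y+1" n] g_def by (intro sum.cong) (auto simp: algebra_simps)
    have h3: "(\<Sum>r\<le>Suc n. of_nat ((Suc k choose r) * (Suc n choose r) * fact r) * g r) = g 0 +
        (\<Sum>r\<le>n. of_nat ((Suc k choose Suc r) * (Suc n choose Suc r) * fact (Suc r)) * g (Suc r))"
      by (subst sum.atMost_Suc_shift) simp
    have c: "(Suc k choose Suc r) * (Suc n choose Suc r) * fact (Suc r) =
          (k choose Suc r) * (Suc n choose Suc r) * fact (Suc r) + Suc n * ((k choose r) * (n choose r) * fact r)"
      for r
    proof -
      have "(Suc n choose Suc r) * fact (Suc r) = (Suc r * (Suc n choose Suc r)) * (fact r::nat)"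
        by (simp add: fact_Suc algebra_simps)
      also have "\<dots> = Suc n * (n choose r) * fact r" by (simp only: Suc_times_binomial)
      finally have H: "(Suc n choose Suc r) * fact (Suc r) = Suc n * ((n choose r) * (fact r::nat))"
        by (simp only: mult.assoc)
      have ar: "Y = a * Z \<Longrightarrow> (p + q) * Y = q * Y + a * (p * Z)" for Y a Z p q :: nat
        by (simp add: algebra_simps)
      show ?thesis using ar[OF H, of "k choose r" "k choose Suc r"]
        by (simp only: binomial_Suc_Suc[of k r] mult.assoc)
    qed
    have "pochhammer (y + of_nat (Suc k)) (Suc n) = g 0 +
        (\<Sum>r\<le>n. of_nat ((Suc k choose Suc r) * (Suc n choose Suc r) * fact (Suc r)) * g (Suc r))"
      unfolding e h1 h2 c by (simp add: sum.distrib sum_distrib_left algebra_simps)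
    then show ?thesis using h3 Suc g_def by simp
  qed
qed

lemma poch_coeff:
  "pochhammer ((y::complex) + of_nat k) l / (fact k * fact l) =
     (\<Sum>r\<le>min k l. pochhammer (y + of_nat r) (l - r) / (fact r * fact (k - r) * fact (l - r)))"
proof -
  have "pochhammer (y + of_nat k) l / (fact k * fact l) =
     (\<Sum>r\<le>l. of_nat ((k choose r) * (l choose r) * fact r) * pochhammer (y + of_nat r) (l - r) / (fact k * fact l))"
    by (subst poch_vandermonde) (simp add: sum_divide_distrib)
  also have "\<dots> = (\<Sum>r\<le>min k l. of_nat ((k choose r) * (l choose r) * fact r) * pochhammer (y + of_nat r) (l - r) / (fact k * fact l))"
    by (intro sum.mono_neutral_right) auto
  also have "\<dots> = (\<Sum>r\<le>min k l. pochhammer (y + of_nat r) (l - r) / (fact r * fact (k - r) * fact (l - r)))"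
  proof (intro sum.cong refl)
    fix r assume "r \<in> {..min k l}"
    then have rk: "r \<le> k" and rl: "r \<le> l" by auto
    have "(fact k :: nat) = fact r * fact (k - r) * (k choose r)" using binomial_fact_lemma[OF rk] by simp
    moreover have "(fact l :: nat) = fact r * fact (l - r) * (l choose r)" using binomial_fact_lemma[OF rl] by simp
    ultimately have e: "(fact k * fact l :: complex) = of_nat ((k choose r) * (l choose r) * fact r) * (fact r * fact (k - r) * fact (l - r))"
      by (metis (no_types, lifting) of_nat_fact of_nat_mult mult.commute mult.left_commute)
    have nz: "(fact r * fact (k - r) * fact (l - r) :: complex) \<noteq> 0" by simp
    have nz2: "of_nat ((k choose r) * (l choose r) * fact r) \<noteq> (0::complex)"
      using rk rl by (simp add: binomial_eq_0_iff)
    show "of_nat ((k choose r) * (l choose r) * fact r) * pochhammer (y + of_nat r) (l - r) / (fact k * fact l) =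
        pochhammer (y + of_nat r) (l - r) / (fact r * fact (k - r) * fact (l - r))"
      unfolding e using nz nz2 by (simp add: field_simps)
  qed
  finally show ?thesis .
qed

lemma coeff_id:
  fixes \<nu> :: complex
  shows
  "rGamma (\<nu> + of_nat k + 1) * rGamma (\<nu> + of_nat l + 1) / (fact k * fact l) =
   rGamma (\<nu> + of_nat (k + l) + 1) * (\<Sum>r\<le>min k l. rGamma (\<nu> + of_nat r + 1) / (fact r * fact (k - r) * fact (l - r)))"
proof -
  have a: "rGamma (\<nu> + of_nat k + 1) = pochhammer ((\<nu>+1) + of_nat k) l * rGamma (\<nu> + of_nat (k + l) + 1)"
    using pochhammer_rGamma[of "\<nu> + of_nat k + 1" l] by (simp add: algebra_simps)
  have b: "rGamma (\<nu> + of_nat r + 1) = pochhammer ((\<nu>+1) + of_nat r) (l - r) * rGamma (\<nu> + of_nat l + 1)"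
    if "r \<in> {..min k l}" for r
    using that pochhammer_rGamma[of "\<nu> + of_nat r + 1" "l - r"] by (simp add: algebra_simps of_nat_diff)
  have "rGamma (\<nu> + of_nat (k + l) + 1) * (\<Sum>r\<le>min k l. rGamma (\<nu> + of_nat r + 1) / (fact r * fact (k - r) * fact (l - r)))
     = rGamma (\<nu> + of_nat (k + l) + 1) * rGamma (\<nu> + of_nat l + 1) * (\<Sum>r\<le>min k l. pochhammer ((\<nu>+1) + of_nat r) (l - r) / (fact r * fact (k - r) * fact (l - r)))"
    unfolding sum_distrib_left
  proof (intro sum.cong refl)
    fix r assume r: "r \<in> {..min k l}"
    show "rGamma (\<nu> + of_nat (k + l) + 1) * (rGamma (\<nu> + of_nat r + 1) / (fact r * fact (k - r) * fact (l - r))) =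
          rGamma (\<nu> + of_nat (k + l) + 1) * rGamma (\<nu> + of_nat l + 1) * (pochhammer ((\<nu>+1) + of_nat r) (l - r) / (fact r * fact (k - r) * fact (l - r)))"
      by (subst b[OF r]) (simp add: mult_ac)
  qed
  also have "\<dots> = rGamma (\<nu> + of_nat (k + l) + 1) * rGamma (\<nu> + of_nat l + 1) * (pochhammer ((\<nu>+1) + of_nat k) l / (fact k * fact l))"
    by (simp only: poch_coeff[of "\<nu>+1" k l])
  finally show ?thesis unfolding a by (simp add: mult_ac)
qed



lemma norm_poch_ge:
  fixes a :: complex
  assumes "Re a \<ge> 1"
  shows "fact d \<le> norm (pochhammer a d)"
proof -
  have "(fact d :: real) = pochhammer 1 d" by (simp add: pochhammer_fact)
  also have "\<dots> = (\<Prod>i = 0..<d. 1 + of_nat i)" by (simp add: pochhammer_prod)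
  also have "\<dots> \<le> (\<Prod>i = 0..<d. norm (a + of_nat i))"
  proof (intro prod_mono conjI)
    fix i assume "i \<in> {0..<d}"
    have "1 + real i \<le> Re (a + of_nat i)" using assms by simp
    also have "\<dots> \<le> norm (a + of_nat i)" by (rule complex_Re_le_cmod)
    finally show "1 + real i \<le> norm (a + of_nat i)" .
  qed auto
  also have "\<dots> = norm (pochhammer a d)" by (simp add: pochhammer_prod prod_norm)
  finally show ?thesis .
qed

lemma rG_bound:
  fixes \<nu> :: complex
  shows "\<exists>K\<ge>0. \<forall>n. norm (rGamma (\<nu> + of_nat n + 1)) * fact n \<le> K * 2 ^ n"
proof -
  obtain N :: nat where N: "- Re \<nu> \<le> of_nat N" using real_arch_simple by blast
  define R where "R = norm (rGamma (\<nu> + of_nat N + 1))"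
  define S where "S = (\<Sum>m<N. norm (rGamma (\<nu> + of_nat m + 1)) * fact m)"
  have S0: "S \<ge> 0" unfolding S_def by (intro sum_nonneg) auto
  have R0: "R \<ge> 0" unfolding R_def by simp
  show ?thesis
  proof (intro exI[of _ "S + fact N * R"] conjI allI)
    show "S + fact N * R \<ge> 0" using S0 R0 by simp
    fix n
    show "norm (rGamma (\<nu> + of_nat n + 1)) * fact n \<le> (S + fact N * R) * 2 ^ n"
    proof (cases "n < N")
      case True
      have "norm (rGamma (\<nu> + of_nat n + 1)) * fact n \<le> S"
        unfolding S_def using True by (intro member_le_sum) auto
      also have "\<dots> \<le> S * 2 ^ n" using S0 mult_left_mono[of 1 "2 ^ n" S] by simp
      also have "\<dots> \<le> (S + fact N * R) * 2 ^ n" using R0 by (simp add: mult_right_mono)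
      finally show ?thesis .
    next
      case False
      define d where "d = n - N"
      have nd: "n = N + d" using False d_def by simp
      have e: "rGamma (\<nu> + of_nat N + 1) = pochhammer (\<nu> + of_nat N + 1) d * rGamma (\<nu> + of_nat n + 1)"
        using pochhammer_rGamma[of "\<nu> + of_nat N + 1" d] by (simp add: nd algebra_simps)
      have p: "fact d \<le> norm (pochhammer (\<nu> + of_nat N + 1) d)"
        using N by (intro norm_poch_ge) simp
      have fd: "fact d * norm (rGamma (\<nu> + of_nat n + 1)) \<le> R"
        unfolding R_def e norm_mult by (intro mult_right_mono p) simp
      have fn: "(fact n :: real) \<le> fact N * fact d * 2 ^ n"
      proof -
        have "(fact n :: real) = fact N * fact d * of_nat (n choose N)"
          using binomial_fact_lemma[of N n] False d_def
          by (metis (mono_tags, lifting) not_less of_nat_fact of_nat_mult)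
        also have "\<dots> \<le> fact N * fact d * 2 ^ n"
          by (intro mult_left_mono) (simp_all add: binomial_le_pow2 flip: of_nat_le_iff)
        finally show ?thesis .
      qed
      have "norm (rGamma (\<nu> + of_nat n + 1)) * fact n \<le> norm (rGamma (\<nu> + of_nat n + 1)) * (fact N * fact d * 2 ^ n)"
        by (intro mult_left_mono fn) simp
      also have "\<dots> = fact N * 2 ^ n * (fact d * norm (rGamma (\<nu> + of_nat n + 1)))" by (simp add: mult_ac)
      also have "\<dots> \<le> fact N * 2 ^ n * R" by (intro mult_left_mono fd) simp
      also have "\<dots> \<le> (S + fact N * R) * 2 ^ n" using S0 by (simp add: algebra_simps)
      finally show ?thesis .
    qed
  qed
qed



lemma exp_summable_on:
  assumes "(c::real) \<ge> 0"
  shows "(\<lambda>n. c ^ n / fact n) summable_on UNIV"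
proof -
  have "(\<lambda>n. c ^ n / fact n) sums exp c"
    using exp_converges[of c] by (simp add: divide_inverse mult.commute)
  then have "((\<lambda>n. c ^ n / fact n) has_sum exp c) UNIV"
    by (rule sums_nonneg_imp_has_sum) (use assms in auto)
  then show ?thesis by (rule has_sum_imp_summable)
qed

lemma prod_has_sum:
  fixes \<alpha> :: "'a \<Rightarrow> 'c::{real_normed_field, banach}" and \<beta> :: "'b \<Rightarrow> 'c"
  assumes "(\<alpha> has_sum A) X" "(\<beta> has_sum B) Y"
    and na: "(\<lambda>x. norm (\<alpha> x)) summable_on X" and nb: "(\<lambda>y. norm (\<beta> y)) summable_on Y"
  shows "((\<lambda>(x,y). \<alpha> x * \<beta> y) has_sum A * B) (X \<times> Y)"
proof -
  have abs: "(\<lambda>p. norm ((\<lambda>(x,y). \<alpha> x * \<beta> y) p)) summable_on Sigma X (\<lambda>_. Y)"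
  proof (rule Infinite_Sum.abs_summable_on_Sigma_iff[THEN iffD2], intro conjI ballI)
    fix x assume "x \<in> X"
    show "(\<lambda>y. norm ((\<lambda>(x,y). \<alpha> x * \<beta> y) (x, y))) summable_on Y"
      using summable_on_cmult_right[OF nb, of "norm (\<alpha> x)"] by (simp add: norm_mult)
  next
    have "(\<lambda>x. norm (\<alpha> x) * infsum (\<lambda>y. norm (\<beta> y)) Y) summable_on X"
      by (rule summable_on_cmult_left[OF na])
    moreover have "norm (\<Sum>\<^sub>\<infinity>y\<in>Y. norm ((\<lambda>(x,y). \<alpha> x * \<beta> y) (x, y))) = norm (\<alpha> x) * infsum (\<lambda>y. norm (\<beta> y)) Y" for x
      by (simp add: norm_mult infsum_cmult_right' infsum_nonneg)
    ultimately show "(\<lambda>x. norm (\<Sum>\<^sub>\<infinity>y\<in>Y. norm ((\<lambda>(x,y). \<alpha> x * \<beta> y) (x, y)))) summable_on X"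
      by simp
  qed
  show ?thesis
  proof (rule has_sum_SigmaI)
    show "(\<lambda>(x,y). \<alpha> x * \<beta> y) summable_on Sigma X (\<lambda>_. Y)"
      by (rule abs_summable_summable[OF abs])
    show "((\<lambda>y. (\<lambda>(x,y). \<alpha> x * \<beta> y) (x, y)) has_sum \<alpha> x * B) Y" if "x \<in> X" for x
      using has_sum_cmult_right[OF assms(2), of "\<alpha> x"] by simp
    show "((\<lambda>x. \<alpha> x * B) has_sum A * B) X"
      by (rule has_sum_cmult_left[OF assms(1)])
  qed
qed

lemma prod_summable_real:
  fixes a :: "'a \<Rightarrow> real" and b :: "'b \<Rightarrow> real"
  assumes "a summable_on X" "b summable_on Y" "\<And>x. a x \<ge> 0" "\<And>y. b y \<ge> 0"
  shows "(\<lambda>(x,y). a x * b y) summable_on (X \<times> Y)"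
proof -
  have "((\<lambda>(x,y). a x * b y) has_sum infsum a X * infsum b Y) (X \<times> Y)"
    by (rule prod_has_sum) (use assms in \<open>auto intro: has_sum_infsum\<close>)
  then show ?thesis by (rule has_sum_imp_summable)
qed



definition cf :: "complex \<Rightarrow> nat \<Rightarrow> complex" where
  "cf \<mu> m = (-1) ^ m * rGamma (\<mu> + of_nat m + 1) / of_nat (fact m)"

definition FF :: "complex \<Rightarrow> complex \<Rightarrow> complex" where
  "FF \<mu> Z = (\<Sum>m. cf \<mu> m * Z ^ m)"

definition EE :: "complex \<Rightarrow> complex \<Rightarrow> complex \<Rightarrow> nat \<times> nat \<Rightarrow> complex" where
  "EE \<mu> U V p = (case p of (j, i) \<Rightarrow>
     (-1) ^ (j + i) * rGamma (\<mu> + of_nat (j + i) + 1) / (fact j * fact i) * U ^ j * V ^ i)"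

lemma div_le_self_real: "(a::real) \<ge> 0 \<Longrightarrow> (c::real) \<ge> 1 \<Longrightarrow> a / c \<le> a"
  by (simp add: divide_le_eq mult_le_cancel_left1)

lemma rG_bound': 
  fixes \<mu> :: complex
  obtains K where "K \<ge> 0" "\<And>n. norm (rGamma (\<mu> + of_nat n + 1)) \<le> K * 2 ^ n / fact n"
    "\<And>n. norm (rGamma (\<mu> + of_nat n + 1)) \<le> K * 2 ^ n"
proof -
  obtain K where K: "K \<ge> 0" "\<And>n. norm (rGamma (\<mu> + of_nat n + 1)) * fact n \<le> K * 2 ^ n"
    using rG_bound[of \<mu>] by blast
  have a: "norm (rGamma (\<mu> + of_nat n + 1)) \<le> K * 2 ^ n / fact n" for n
    using K(2)[of n] by (simp add: pos_le_divide_eq)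
  have b: "norm (rGamma (\<mu> + of_nat n + 1)) \<le> K * 2 ^ n" for n
  proof -
    have "norm (rGamma (\<mu> + of_nat n + 1)) \<le> norm (rGamma (\<mu> + of_nat n + 1)) * fact n"
      using fact_ge_1[of n, where 'a=real] by (simp add: mult_le_cancel_left1)
    then show ?thesis using K(2)[of n] by linarith
  qed
  show ?thesis by (rule that[OF K(1) a b])
qed

lemma F_abs:
  "summable (\<lambda>m. norm (cf \<mu> m * Z ^ m))"
  "(\<lambda>m. norm (cf \<mu> m * Z ^ m)) summable_on UNIV"
  "((\<lambda>m. cf \<mu> m * Z ^ m) has_sum FF \<mu> Z) UNIV"
proof -
  obtain K where K: "K \<ge> 0" "\<And>n. norm (rGamma (\<mu> + of_nat n + 1)) \<le> K * 2 ^ n / fact n"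
    "\<And>n. norm (rGamma (\<mu> + of_nat n + 1)) \<le> K * 2 ^ n"
    by (rule rG_bound'[of \<mu>]) (rule that)
  have b: "norm (cf \<mu> m * Z ^ m) \<le> K * ((2 * norm Z) ^ m / fact m)" for m
  proof -
    have "norm (cf \<mu> m * Z ^ m) = norm (rGamma (\<mu> + of_nat m + 1)) / fact m * norm Z ^ m"
      by (simp add: cf_def norm_mult norm_divide norm_power)
    also have "\<dots> \<le> K * 2 ^ m / fact m / fact m * norm Z ^ m"
      by (intro mult_right_mono divide_right_mono K(2)) auto
    also have "\<dots> \<le> K * 2 ^ m / fact m * norm Z ^ m"
    proof (intro mult_right_mono)
      have "K * 2 ^ m / fact m \<ge> 0" using K(1) by simp
      then show "K * 2 ^ m / fact m / fact m \<le> K * 2 ^ m / fact m"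
        using fact_ge_1[of m, where 'a=real] by (rule div_le_self_real)
    qed simp
    also have "\<dots> = K * ((2 * norm Z) ^ m / fact m)" by (simp add: power_mult_distrib)
    finally show ?thesis .
  qed
  have s: "summable (\<lambda>m. K * ((2 * norm Z) ^ m / fact m))"
    using summable_exp[of "2 * norm Z"] by (intro summable_mult) (simp add: divide_inverse mult.commute)
  show s1: "summable (\<lambda>m. norm (cf \<mu> m * Z ^ m))"
    by (rule summable_comparison_test[OF _ s]) (use b in auto)
  show "(\<lambda>m. norm (cf \<mu> m * Z ^ m)) summable_on UNIV"
    using sums_nonneg_imp_has_sum[OF summable_sums[OF s1]] has_sum_imp_summable by auto
  show "((\<lambda>m. cf \<mu> m * Z ^ m) has_sum FF \<mu> Z) UNIV"
    unfolding FF_def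
    by (rule norm_summable_imp_has_sum[OF s1 summable_sums[OF summable_norm_cancel[OF s1]]])
qed

lemma EE_norm_summable: "(\<lambda>p. norm (EE \<mu> U V p)) summable_on UNIV"
proof -
  obtain K where K': "K \<ge> 0" "\<And>n. norm (rGamma (\<mu> + of_nat n + 1)) \<le> K * 2 ^ n / fact n"
    "\<And>n. norm (rGamma (\<mu> + of_nat n + 1)) \<le> K * 2 ^ n"
    by (rule rG_bound'[of \<mu>]) (rule that)
  note K = K'(1) K'(3)
  have ps: "(\<lambda>(j,i). (2 * norm U) ^ j / fact j * ((2 * norm V) ^ i / fact i)) summable_on UNIV \<times> UNIV"
    by (rule prod_summable_real[OF exp_summable_on exp_summable_on]) simp_all
  have ps2: "(\<lambda>p. K * (case p of (j,i) \<Rightarrow> (2 * norm U) ^ j / fact j * ((2 * norm V) ^ i / fact i))) summable_on UNIV"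
    using summable_on_cmult_right[OF ps, of K] by simp
  show ?thesis
  proof (rule Infinite_Sum.abs_summable_on_comparison_test'[OF ps2])
    fix p :: "nat \<times> nat"
    obtain j i where p: "p = (j, i)" by (cases p)
    have "norm (EE \<mu> U V p) = norm (rGamma (\<mu> + of_nat (j + i) + 1)) / (fact j * fact i) * norm U ^ j * norm V ^ i"
      by (simp add: EE_def p norm_mult norm_divide norm_power)
    also have "\<dots> \<le> K * 2 ^ (j + i) / (fact j * fact i) * norm U ^ j * norm V ^ i"
      by (intro mult_right_mono divide_right_mono K(2)) auto
    also have "\<dots> = K * (case p of (j,i) \<Rightarrow> (2 * norm U) ^ j / fact j * ((2 * norm V) ^ i / fact i))"
      by (simp add: p power_add power_mult_distrib field_simps)
    finally show "norm (EE \<mu> U V p) \<le> K * (case p of (j,i) \<Rightarrow> (2 * norm U) ^ j / fact j * ((2 * norm V) ^ i / fact i))" .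
  qed
qed

lemma EE_fiber:
  "(\<Sum>j\<le>m. EE \<mu> U V (j, m - j)) = cf \<mu> m * (U + V) ^ m"
proof -
  have "(\<Sum>j\<le>m. EE \<mu> U V (j, m - j)) = (\<Sum>j\<le>m. cf \<mu> m * (of_nat (m choose j) * U ^ j * V ^ (m - j)))"
  proof (intro sum.cong refl)
    fix j assume "j \<in> {..m}"
    then have jm: "j \<le> m" by simp
    have "of_nat (m choose j) = (fact m / (fact j * fact (m - j)) :: complex)" by (rule binomial_fact[OF jm])
    then show "EE \<mu> U V (j, m - j) = cf \<mu> m * (of_nat (m choose j) * U ^ j * V ^ (m - j))"
      using jm by (simp add: EE_def cf_def)
  qed
  also have "\<dots> = cf \<mu> m * (U + V) ^ m" by (simp add: binomial_ring sum_distrib_left)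
  finally show ?thesis .
qed

lemma EE_has_sum: "(EE \<mu> U V has_sum FF \<mu> (U + V)) UNIV"
proof -
  define g where "g = (\<lambda>(m, j). EE \<mu> U V (j, m - j))"
  have bij1: "(g has_sum FF \<mu> (U + V)) (Sigma UNIV (\<lambda>m. {..m})) = (EE \<mu> U V has_sum FF \<mu> (U + V)) UNIV"
    by (rule has_sum_reindex_bij_witness[where i = "\<lambda>(j, i). (j + i, j)" and j = "\<lambda>(m, j). (j, m - j)"])
       (auto simp: g_def)
  have summ: "g summable_on (Sigma UNIV (\<lambda>m. {..m}))"
  proof -
    have "EE \<mu> U V summable_on UNIV" by (rule abs_summable_summable[OF EE_norm_summable])
    moreover have "(g summable_on (Sigma UNIV (\<lambda>m. {..m}))) = (EE \<mu> U V summable_on UNIV)"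
      by (rule summable_on_reindex_bij_witness[where i = "\<lambda>(j, i). (j + i, j)" and j = "\<lambda>(m, j). (j, m - j)"])
         (auto simp: g_def)
    ultimately show ?thesis by simp
  qed
  have "(g has_sum FF \<mu> (U + V)) (Sigma UNIV (\<lambda>m. {..m}))"
  proof (rule has_sum_SigmaI[OF _ _ summ])
    show "((\<lambda>j. g (m, j)) has_sum cf \<mu> m * (U + V) ^ m) {..m}" for m
      by (rule has_sum_finiteI) (auto simp: g_def EE_fiber)
    show "((\<lambda>m. cf \<mu> m * (U + V) ^ m) has_sum FF \<mu> (U + V)) UNIV" by (rule F_abs(3))
  qed
  with bij1 show ?thesis by simp
qed



definition TT :: "complex \<Rightarrow> complex \<Rightarrow> complex \<Rightarrow> nat \<times> nat \<times> nat \<Rightarrow> complex" where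
  "TT \<nu> U V q = (case q of (r, p) \<Rightarrow>
     (U * V) ^ r * (rGamma (\<nu> + of_nat r + 1) / of_nat (fact r)) * EE (\<nu> + 2 * of_nat r) U V p)"

lemma TT_norm_summable: "(\<lambda>q. norm (TT \<nu> U V q)) summable_on UNIV"
proof -
  obtain K where K': "K \<ge> 0" "\<And>n. norm (rGamma (\<nu> + of_nat n + 1)) \<le> K * 2 ^ n / fact n"
    "\<And>n. norm (rGamma (\<nu> + of_nat n + 1)) \<le> K * 2 ^ n"
    by (rule rG_bound'[of \<nu>]) (rule that)
  define a where "a r = K * ((8 * norm U * norm V) ^ r / fact r)" for r
  define b where "b p = K * (case p of (j,i) \<Rightarrow> (2 * norm U) ^ j / fact j * ((2 * norm V) ^ i / fact i))" for p
  have ps: "(\<lambda>(j,i). (2 * norm U) ^ j / fact j * ((2 * norm V) ^ i / fact i)) summable_on UNIV \<times> UNIV"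
    by (rule prod_summable_real[OF exp_summable_on exp_summable_on]) simp_all
  have bs: "b summable_on UNIV"
    using summable_on_cmult_right[OF ps, of K] unfolding b_def UNIV_Times_UNIV .
  have as: "a summable_on UNIV"
    unfolding a_def by (rule summable_on_cmult_right[OF exp_summable_on]) simp
  have abs: "(\<lambda>(r,p). a r * b p) summable_on UNIV \<times> UNIV"
    by (rule prod_summable_real[OF as bs]) (auto simp: a_def b_def K'(1))
  show ?thesis
  proof (rule Infinite_Sum.abs_summable_on_comparison_test')
    show "(\<lambda>(r,p). a r * b p) summable_on UNIV" using abs by simp
    fix q :: "nat \<times> nat \<times> nat"
    obtain r j i where q: "q = (r, j, i)" by (cases q) auto
    have c1: "norm (rGamma (\<nu> + of_nat r + 1) / of_nat (fact r)) \<le> K * 2 ^ r / fact r"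
    proof -
      have "norm (rGamma (\<nu> + of_nat r + 1) / of_nat (fact r)) = norm (rGamma (\<nu> + of_nat r + 1)) / fact r"
        by (simp add: norm_divide)
      also have "\<dots> \<le> norm (rGamma (\<nu> + of_nat r + 1))"
        by (rule div_le_self_real) (simp_all add: fact_ge_1)
      also have "\<dots> \<le> K * 2 ^ r / fact r" by (rule K'(2))
      finally show ?thesis .
    qed
    have c2: "norm (rGamma (\<nu> + 2 * of_nat r + of_nat (j + i) + 1)) \<le> K * 2 ^ (2 * r + (j + i))"
    proof -
      have "\<nu> + 2 * of_nat r + of_nat (j + i) + 1 = \<nu> + of_nat (2 * r + (j + i)) + 1" by simp
      then show ?thesis using K'(3)[of "2 * r + (j + i)"] by (simp only:)
    qed
    have "norm (TT \<nu> U V q) = (norm U * norm V) ^ r * norm (rGamma (\<nu> + of_nat r + 1) / of_nat (fact r))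
        * (norm (rGamma (\<nu> + 2 * of_nat r + of_nat (j + i) + 1)) / (fact j * fact i) * norm U ^ j * norm V ^ i)"
      by (simp add: TT_def EE_def q norm_mult norm_divide norm_power power_mult_distrib)
    also have "\<dots> \<le> (norm U * norm V) ^ r * (K * 2 ^ r / fact r)
        * (K * 2 ^ (2 * r + (j + i)) / (fact j * fact i) * norm U ^ j * norm V ^ i)"
      by (intro mult_mono mult_right_mono divide_right_mono c1 c2) (auto simp: K'(1))
    also have "\<dots> = a r * b (j, i)"
    proof -
      have e8: "(8::real) ^ r = 2 ^ r * (2 ^ r)\<^sup>2"
        by (induction r) (simp_all add: algebra_simps power2_eq_square)
      show ?thesis
        by (simp add: a_def b_def power_add power_mult power_mult_distrib field_simps e8)
    qed
    finally show "norm (TT \<nu> U V q) \<le> (\<lambda>(r,p). a r * b p) q" by (simp add: q)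
  qed
qed

lemma TT_term:
  assumes "r \<le> min k l"
  shows "TT \<nu> U V (r, (k - r, l - r)) = (-1) ^ (k + l) * U ^ k * V ^ l * rGamma (\<nu> + of_nat (k + l) + 1)
           * (rGamma (\<nu> + of_nat r + 1) / (fact r * fact (k - r) * fact (l - r)))"
proof -
  obtain a b where k: "k = r + a" and l: "l = r + b" using assms
    by (metis le_add_diff_inverse min.bounded_iff)
  have s: "(-1::complex) ^ (r + a + (r + b)) = (-1) ^ (a + b)"
  proof -
    have "(-1::complex) ^ (r + a + (r + b)) = ((-1) ^ r * (-1) ^ r) * (-1) ^ (a + b)"
      by (simp add: power_add mult_ac)
    also have "(-1::complex) ^ r * (-1) ^ r = 1" by (simp flip: power_add)
    finally show ?thesis by simp
  qed
  have g: "\<nu> + of_nat (r + a + (r + b)) + 1 = \<nu> + 2 * of_nat r + of_nat (a + b) + 1"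
    by (simp add: algebra_simps)
  have "TT \<nu> U V (r, (k - r, l - r)) = (U * V) ^ r * (rGamma (\<nu> + of_nat r + 1) / of_nat (fact r)) *
      ((-1) ^ (a + b) * rGamma (\<nu> + 2 * of_nat r + of_nat (a + b) + 1) / (fact a * fact b) * U ^ a * V ^ b)"
    by (simp add: TT_def EE_def k l)
  also have "\<dots> = (-1) ^ (r + a + (r + b)) * U ^ (r + a) * V ^ (r + b) * rGamma (\<nu> + of_nat (r + a + (r + b)) + 1)
           * (rGamma (\<nu> + of_nat r + 1) / (fact r * fact a * fact b))"
    unfolding s g by (simp add: power_add power_mult_distrib mult_ac)
  finally show ?thesis by (simp add: k l)
qed

lemma TT_fiber:
  fixes \<nu> :: complex
  shows "(\<Sum>r\<le>min k l. TT \<nu> U V (r, (k - r, l - r))) = cf \<nu> k * U ^ k * (cf \<nu> l * V ^ l)"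
proof -
  have "(\<Sum>r\<le>min k l. TT \<nu> U V (r, (k - r, l - r))) =
     (\<Sum>r\<le>min k l. (-1) ^ (k + l) * U ^ k * V ^ l * rGamma (\<nu> + of_nat (k + l) + 1)
           * (rGamma (\<nu> + of_nat r + 1) / (fact r * fact (k - r) * fact (l - r))))"
    by (intro sum.cong refl TT_term) simp
  also have "\<dots> = (-1) ^ (k + l) * U ^ k * V ^ l * (rGamma (\<nu> + of_nat (k + l) + 1)
           * (\<Sum>r\<le>min k l. rGamma (\<nu> + of_nat r + 1) / (fact r * fact (k - r) * fact (l - r))))"
    by (simp add: sum_distrib_left mult_ac)
  also have "\<dots> = (-1) ^ (k + l) * U ^ k * V ^ l * (rGamma (\<nu> + of_nat k + 1) * rGamma (\<nu> + of_nat l + 1) / (fact k * fact l))"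
    by (simp only: coeff_id)
  also have "\<dots> = cf \<nu> k * U ^ k * (cf \<nu> l * V ^ l)"
    by (simp add: cf_def power_add mult_ac)
  finally show ?thesis .
qed

lemma core:
  fixes \<nu> U V :: complex
  shows "(\<lambda>r. (U * V) ^ r * (rGamma (\<nu> + of_nat r + 1) / of_nat (fact r)) * FF (\<nu> + 2 * of_nat r) (U + V))
           sums (FF \<nu> U * FF \<nu> V)"
proof -
  have Tsum: "TT \<nu> U V summable_on UNIV"
    by (rule abs_summable_summable[OF TT_norm_summable])
  define G where "G = (\<lambda>((k::nat, l::nat), r::nat). TT \<nu> U V (r, (k - r, l - r)))"
  define SS where "SS = Sigma (UNIV :: (nat \<times> nat) set) (\<lambda>(k, l). {..min k l})"
  have reidx: "(G has_sum s) SS = (TT \<nu> U V has_sum s) UNIV" for s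
    unfolding SS_def
    by (rule has_sum_reindex_bij_witness[where i = "\<lambda>(r, j, i). ((r + j, r + i), r)" and j = "\<lambda>((k, l), r). (r, (k - r, l - r))"])
       (auto simp: G_def)
  have Gsum: "G summable_on SS"
  proof -
    have "(G summable_on SS) = (TT \<nu> U V summable_on UNIV)"
      unfolding SS_def
      by (rule summable_on_reindex_bij_witness[where i = "\<lambda>(r, j, i). ((r + j, r + i), r)" and j = "\<lambda>((k, l), r). (r, (k - r, l - r))"])
         (auto simp: G_def)
    with Tsum show ?thesis by simp
  qed
  have prod: "((\<lambda>(k, l). cf \<nu> k * U ^ k * (cf \<nu> l * V ^ l)) has_sum FF \<nu> U * FF \<nu> V) (UNIV \<times> UNIV)"
    by (rule prod_has_sum[OF F_abs(3) F_abs(3) F_abs(2) F_abs(2)])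
  have "(G has_sum FF \<nu> U * FF \<nu> V) SS"
    unfolding SS_def
  proof (rule has_sum_SigmaI)
    show "G summable_on Sigma UNIV (\<lambda>(k, l). {..min k l})" using Gsum by (simp add: SS_def)
    show "((\<lambda>r. G (kl, r)) has_sum (\<lambda>(k, l). cf \<nu> k * U ^ k * (cf \<nu> l * V ^ l)) kl) ((\<lambda>(k, l). {..min k l}) kl)"
      for kl
    proof -
      obtain k l where kl: "kl = (k, l)" by (cases kl)
      show ?thesis unfolding kl by (rule has_sum_finiteI) (auto simp: G_def TT_fiber)
    qed
    show "((\<lambda>(k, l). cf \<nu> k * U ^ k * (cf \<nu> l * V ^ l)) has_sum FF \<nu> U * FF \<nu> V) UNIV"
      using prod by simp
  qed
  then have Thas: "(TT \<nu> U V has_sum FF \<nu> U * FF \<nu> V) UNIV" using reidx by simp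
  have Thas': "(TT \<nu> U V has_sum FF \<nu> U * FF \<nu> V) (Sigma UNIV (\<lambda>_. UNIV))"
    using Thas by simp
  have "((\<lambda>r. (U * V) ^ r * (rGamma (\<nu> + of_nat r + 1) / of_nat (fact r)) * FF (\<nu> + 2 * of_nat r) (U + V))
          has_sum FF \<nu> U * FF \<nu> V) UNIV"
  proof (rule has_sum_SigmaD[OF Thas'])
    fix r :: nat
    show "((\<lambda>p. TT \<nu> U V (r, p)) has_sum (U * V) ^ r * (rGamma (\<nu> + of_nat r + 1) / of_nat (fact r)) * FF (\<nu> + 2 * of_nat r) (U + V)) UNIV"
      unfolding TT_def using has_sum_cmult_right[OF EE_has_sum, of "(U * V) ^ r * (rGamma (\<nu> + of_nat r + 1) / of_nat (fact r))" "\<nu> + 2 * of_nat r" U V]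
      by simp
  qed
  then show ?thesis by (rule has_sum_imp_sums)
qed



lemma besselJ_eq: "besselJ \<mu> z = (z / 2) powr \<mu> * FF \<mu> ((z / 2) ^ 2)"
proof -
  have sm: "summable (\<lambda>k. cf \<mu> k * ((z / 2) ^ 2) ^ k)"
    by (rule summable_norm_cancel[OF F_abs(1)])
  have "besselJ \<mu> z = (\<Sum>k. (z / 2) powr \<mu> * (cf \<mu> k * ((z / 2) ^ 2) ^ k))"
    unfolding besselJ_def cf_def power_mult by (rule arg_cong[where f=suminf], rule ext) (simp only: mult_ac)
  also have "\<dots> = (z / 2) powr \<mu> * FF \<mu> ((z / 2) ^ 2)"
    unfolding FF_def by (rule suminf_mult[OF sm])
  finally show ?thesis .
qed

lemma powr_mult_pos:
  assumes "p \<ge> 0" "q \<ge> 0"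
  shows "(complex_of_real p * complex_of_real q) powr \<mu> = complex_of_real p powr \<mu> * complex_of_real q powr \<mu>"
  using assms by (intro powr_times_real) auto

theorem mainTheorem12:
  fixes \<nu> :: complex and a b x :: real
  assumes "a > 0" and "b > 0" and "x > 0"
  shows "(\<lambda>r. (of_real (a * b * x / (2 * sqrt (a\<^sup>2 + b\<^sup>2)))) powr \<nu>
              * (rGamma (\<nu> + of_nat r + 1) / of_nat (fact r))
              * (of_real (a * b * x / (2 * sqrt (a\<^sup>2 + b\<^sup>2)))) ^ (2 * r)
              * besselJ (\<nu> + 2 * of_nat r) (of_real (x * sqrt (a\<^sup>2 + b\<^sup>2))))
         sums (besselJ \<nu> (of_real (a * x)) * besselJ \<nu> (of_real (b * x)))"
proof -
  define c where "c = sqrt (a\<^sup>2 + b\<^sup>2)"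
  have c0: "c > 0" unfolding c_def using assms by (simp add: add_pos_pos)
  have c2: "c\<^sup>2 = a\<^sup>2 + b\<^sup>2" unfolding c_def by (simp add: add_nonneg_nonneg)
  define u where "u = complex_of_real (a * x / 2)"
  define v where "v = complex_of_real (b * x / 2)"
  define s where "s = complex_of_real (x * c / 2)"
  define w where "w = complex_of_real (a * b * x / (2 * c))"
  have hu: "complex_of_real (a * x) / 2 = u" unfolding u_def by simp
  have hv: "complex_of_real (b * x) / 2 = v" unfolding v_def by simp
  have hs: "complex_of_real (x * c) / 2 = s" unfolding s_def by simp
  have ws: "w * s = u * v"
  proof -
    have "a * b * x / (2 * c) * (x * c / 2) = a * x / 2 * (b * x / 2)" using c0 by (simp add: field_simps)
    then show ?thesis unfolding w_def s_def u_def v_def by (simp only: of_real_mult[symmetric])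
  qed
  have s2: "s ^ 2 = u ^ 2 + v ^ 2"
  proof -
    have "(x * c / 2) ^ 2 = (a * x / 2) ^ 2 + (b * x / 2) ^ 2"
      by (simp add: power_mult_distrib power_divide c2 field_simps)
    then show ?thesis unfolding s_def u_def v_def by (simp only: of_real_power[symmetric] of_real_add[symmetric])
  qed
  have pw: "w powr \<nu> * s powr \<nu> = u powr \<nu> * v powr \<nu>"
  proof -
    have "w powr \<nu> * s powr \<nu> = (w * s) powr \<nu>"
      unfolding w_def s_def using assms c0 by (intro powr_mult_pos[symmetric]) auto
    also have "\<dots> = (u * v) powr \<nu>" by (simp only: ws)
    also have "\<dots> = u powr \<nu> * v powr \<nu>"
      unfolding u_def v_def using assms by (intro powr_mult_pos) auto
    finally show ?thesis .
  qed
  have s0: "s \<noteq> 0" unfolding s_def using assms c0 by simp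
  have tm: "w powr \<nu> * (rGamma (\<nu> + of_nat r + 1) / of_nat (fact r)) * w ^ (2 * r)
        * besselJ (\<nu> + 2 * of_nat r) (complex_of_real (x * c))
      = (u powr \<nu> * v powr \<nu>) * ((u ^ 2 * v ^ 2) ^ r * (rGamma (\<nu> + of_nat r + 1) / of_nat (fact r))
          * FF (\<nu> + 2 * of_nat r) (u ^ 2 + v ^ 2))" for r
  proof -
    have sp: "s powr (\<nu> + 2 * of_nat r) = s powr \<nu> * s ^ (2 * r)"
    proof -
      have "s powr (2 * of_nat r) = s ^ (2 * r)"
        using powr_nat'[of s "2 * r"] s0 by simp
      then show ?thesis by (simp add: powr_add)
    qed
    have bj: "besselJ (\<nu> + 2 * of_nat r) (complex_of_real (x * c)) = s powr \<nu> * s ^ (2 * r) * FF (\<nu> + 2 * of_nat r) (u ^ 2 + v ^ 2)"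
      by (simp only: besselJ_eq hs sp s2)
    have e2: "w ^ (2 * r) * s ^ (2 * r) = (u ^ 2 * v ^ 2) ^ r"
    proof -
      have "w ^ (2 * r) * s ^ (2 * r) = (w * s) ^ (2 * r)" by (simp only: power_mult_distrib)
      also have "\<dots> = (u * v) ^ (2 * r)" by (simp only: ws)
      also have "\<dots> = ((u * v) ^ 2) ^ r" by (simp only: power_mult)
      also have "\<dots> = (u ^ 2 * v ^ 2) ^ r" by (simp only: power_mult_distrib)
      finally show ?thesis .
    qed
    have "w powr \<nu> * (rGamma (\<nu> + of_nat r + 1) / of_nat (fact r)) * w ^ (2 * r)
        * besselJ (\<nu> + 2 * of_nat r) (complex_of_real (x * c))
      = (w powr \<nu> * s powr \<nu>) * (w ^ (2 * r) * s ^ (2 * r)) * (rGamma (\<nu> + of_nat r + 1) / of_nat (fact r)) * FF (\<nu> + 2 * of_nat r) (u ^ 2 + v ^ 2)"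
      unfolding bj by (simp only: mult_ac)
    also have "\<dots> = (u powr \<nu> * v powr \<nu>) * ((u ^ 2 * v ^ 2) ^ r * (rGamma (\<nu> + of_nat r + 1) / of_nat (fact r))
          * FF (\<nu> + 2 * of_nat r) (u ^ 2 + v ^ 2))"
      unfolding pw e2 by (simp only: mult_ac)
    finally show ?thesis .
  qed
  have target: "besselJ \<nu> (complex_of_real (a * x)) * besselJ \<nu> (complex_of_real (b * x))
     = (u powr \<nu> * v powr \<nu>) * (FF \<nu> (u ^ 2) * FF \<nu> (v ^ 2))"
    by (simp only: besselJ_eq hu hv mult_ac)
  have "(\<lambda>r. (u powr \<nu> * v powr \<nu>) * ((u ^ 2 * v ^ 2) ^ r * (rGamma (\<nu> + of_nat r + 1) / of_nat (fact r))
          * FF (\<nu> + 2 * of_nat r) (u ^ 2 + v ^ 2))) sums ((u powr \<nu> * v powr \<nu>) * (FF \<nu> (u ^ 2) * FF \<nu> (v ^ 2)))"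
    by (rule sums_mult[OF core])
  then show ?thesis
    unfolding target c_def[symmetric] w_def[symmetric] tm .
qed

end
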